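(* Let $\alpha\ge0$ and $0\le\beta<1$. Let $f=h+\overline{g}\in\mathcal{W}_{\mathcal{H}}^0(\alpha,\beta)$ and let $\phi$ be analytic in $\mathbb{D}$ with $\phi(0)=0$, $\phi'(0)=1$ and $\Re\dfrac{\phi(z)}{z}>\dfrac12$ for all $z\in\mathbb{D}$. Then $f\,\widehat{*}\,\phi:=h*\phi+\overline{g*\phi}\in\mathcal{W}_{\mathcal{H}}^0(\alpha,\beta)$.
   Context: Let $\mathbb{D}=\{z\in\mathbb{C}:|z|<1\}$. $\mathcal{H}^0$ denotes the class of harmonic maps $f=h+\overline{g}$ on $\mathbb{D}$, with $h,g$ analytic in $\mathbb{D}$, $h(z)=z+\sum_{n\ge2}a_nz^n$ and $g(z)=\sum_{n\ge2}b_nz^n$. For $\alpha\ge0$, $0\le\beta<1$, $\mathcal{W}_{\mathcal{H}}^0(\alpha,\beta)$ denotes the class of $f=h+\overline{g}\in\mathcal{H}^0$ such that $\Re\big(h'(z)+\alpha zh''(z)-\beta\big)>|g'(z)+\alpha zg''(z)|$ for all $z\in\mathbb{D}$. For analytic $\psi_1(z)=\sum c_nz^n$, $\psi_2(z)=\sum d_nz^n$, the Hadamard product is $(\psi_1*\psi_2)(z)=\sum c_nd_nz^n$. *)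

theory Defs
  imports "HOL-Complex_Analysis.Complex_Analysis"
begin

definition taylor_coeff :: "(complex \<Rightarrow> complex) \<Rightarrow> nat \<Rightarrow> complex" where
  "taylor_coeff f n = (deriv ^^ n) f 0 / of_nat (fact n)"

definition hadamard :: "(complex \<Rightarrow> complex) \<Rightarrow> (complex \<Rightarrow> complex) \<Rightarrow> complex \<Rightarrow> complex" where
  "hadamard p q = (\<lambda>z. \<Sum>n. taylor_coeff p n * taylor_coeff q n * z ^ n)"

text \<open>A harmonic map is represented by the pair (h, g) of its analytic parts.\<close>
definition in_H0 :: "(complex \<Rightarrow> complex) \<Rightarrow> (complex \<Rightarrow> complex) \<Rightarrow> bool" where
  "in_H0 h g \<longleftrightarrow> h holomorphic_on ball 0 1 \<and> g holomorphic_on ball 0 1 \<and>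
     h 0 = 0 \<and> deriv h 0 = 1 \<and> g 0 = 0 \<and> deriv g 0 = 0"

definition W_H0 :: "real \<Rightarrow> real \<Rightarrow> (complex \<Rightarrow> complex) \<Rightarrow> (complex \<Rightarrow> complex) \<Rightarrow> bool" where
  "W_H0 \<alpha> \<beta> h g \<longleftrightarrow> in_H0 h g \<and>
     (\<forall>z\<in>ball 0 1.
        Re (deriv h z + of_real \<alpha> * z * deriv (deriv h) z - of_real \<beta>)
          > cmod (deriv g z + of_real \<alpha> * z * deriv (deriv g) z))"

end

theory Submission
  imports Defs
begin


lemma orth_int:
  fixes k :: int
  shows "((\<lambda>t::real. exp (\<i> * of_int k * of_real t)) has_integral (if k = 0 then 2*pi else 0)) {0..2*pi}"
proof (cases "k = 0")
  case True then show ?thesis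
    using has_integral_const_real[of "1::complex" 0 "2*pi"] by (simp add: scaleR_conv_of_real)
next
  case False
  have d: "((\<lambda>t::real. exp (\<i> * of_int k * of_real t) / (\<i> * of_int k)) has_vector_derivative exp (\<i> * of_int k * of_real t)) (at t within {0..2*pi})" for t
  proof -
    have "((\<lambda>x. exp (\<i> * of_int k * x) / (\<i> * of_int k)) has_field_derivative exp (\<i> * of_int k * of_real t)) (at (of_real t))"
      using False by (auto intro!: derivative_eq_intros simp: field_simps)
    then show ?thesis by (rule has_vector_derivative_real_field)
  qed
  have e: "exp (\<i> * of_int k * of_real (2*pi)) = 1"
    using exp_integer_2pi[of "of_int k"] by (simp add: mult_ac)
  have "((\<lambda>t::real. exp (\<i> * of_int k * of_real t)) has_integral 
        (exp (\<i> * of_int k * of_real (2*pi)) / (\<i> * of_int k) - exp (\<i> * of_int k * of_real 0) / (\<i> * of_int k))) {0..2*pi}"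
    by (rule fundamental_theorem_of_calculus) (use d in auto)
  with e False show ?thesis by simp
qed

lemma orth_nat:
  fixes k n :: nat
  shows "((\<lambda>t::real. exp (\<i> * of_real t) ^ k / exp (\<i> * of_real t) ^ n) has_integral (if k = n then 2*pi else 0)) {0..2*pi}"
proof -
  have eq: "exp (\<i> * of_real t) ^ k / exp (\<i> * of_real t) ^ n = exp (\<i> * of_int (int k - int n) * of_real t)" for t :: real
  proof -
    have "exp (\<i> * of_real t) ^ k = exp (of_nat k * (\<i> * of_real t))" by (simp add: exp_of_nat_mult)
    moreover have "exp (\<i> * of_real t) ^ n = exp (of_nat n * (\<i> * of_real t))" by (simp add: exp_of_nat_mult)
    ultimately show ?thesis by (simp add: exp_diff[symmetric] algebra_simps)
  qed
  show ?thesis unfolding eq using orth_int[of "int k - int n"] by simp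
qed

lemma termwise_integral:
  fixes f :: "nat \<Rightarrow> real \<Rightarrow> complex"
  assumes c: "\<And>k. continuous_on {a..b} (f k)"
    and le: "\<And>k t. t \<in> {a..b} \<Longrightarrow> norm (f k t) \<le> M k" and M: "summable M"
  shows "(\<lambda>k. integral {a..b} (f k)) sums integral {a..b} (\<lambda>t. \<Sum>k. f k t)"
    and "(\<lambda>t. \<Sum>k. f k t) integrable_on {a..b}"
proof -
  have u: "uniform_limit {a..b} (\<lambda>n t. \<Sum>i<n. f i t) (\<lambda>t. \<Sum>k. f k t) sequentially"
    by (rule Weierstrass_m_test[OF le M])
  have cs: "continuous_on {a..b} (\<lambda>t. \<Sum>i<n. f i t)" for n
    by (intro continuous_on_sum c)
  obtain I J where I: "\<And>n. ((\<lambda>t. \<Sum>i<n. f i t) has_integral I n) {a..b}"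
    and J: "((\<lambda>t. \<Sum>k. f k t) has_integral J) {a..b}" and IJ: "I \<longlonglongrightarrow> J"
    using uniform_limit_integral[OF u cs] by auto
  have fi: "f k integrable_on {a..b}" for k using c integrable_continuous_real by blast
  have "I n = (\<Sum>i<n. integral {a..b} (f i))" for n
  proof -
    have "((\<lambda>t. \<Sum>i<n. f i t) has_integral (\<Sum>i<n. integral {a..b} (f i))) {a..b}"
      by (intro has_integral_sum) (auto intro: integrable_integral fi)
    then show ?thesis using I has_integral_unique by blast
  qed
  then have "I = (\<lambda>n. \<Sum>i<n. integral {a..b} (f i))" by (rule ext)
  then have "(\<lambda>k. integral {a..b} (f k)) sums J" using IJ by (simp add: sums_def)
  then show "(\<lambda>k. integral {a..b} (f k)) sums integral {a..b} (\<lambda>t. \<Sum>k. f k t)"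
    using J integral_unique by metis
  show "(\<lambda>t. \<Sum>k. f k t) integrable_on {a..b}" using J by blast
qed



lemma termwise_has_integral:
  fixes f :: "nat \<Rightarrow> real \<Rightarrow> complex"
  assumes c: "\<And>k. continuous_on {a..b} (f k)"
    and le: "\<And>k t. t \<in> {a..b} \<Longrightarrow> norm (f k t) \<le> M k" and M: "summable M"
    and I: "(\<lambda>k. integral {a..b} (f k)) sums L"
  shows "((\<lambda>t. \<Sum>k. f k t) has_integral L) {a..b}"
proof -
  have "L = integral {a..b} (\<lambda>t. \<Sum>k. f k t)"
    using termwise_integral(1)[OF c le M] I sums_unique2 by blast
  then show ?thesis using termwise_integral(2)[OF c le M] by (simp add: integrable_integral)
qed

lemma cnj_expi: "cnj (exp (\<i> * of_real t)) = 1 / exp (\<i> * of_real t)"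
  by (simp add: exp_cnj exp_minus divide_inverse)

lemma weight_coeff:
  fixes Sf :: "complex fps" and \<rho> :: real
  assumes R: "fps_conv_radius Sf \<ge> 1" and \<rho>: "0 < \<rho>" "\<rho> < 1" and s0: "fps_nth Sf 0 = 1"
  shows "((\<lambda>t. of_real (2 * Re (eval_fps Sf (of_real \<rho> * exp (\<i> * of_real t))) - 1) / exp (\<i> * of_real t) ^ n)
           has_integral (2*pi * fps_nth Sf n * of_real \<rho> ^ n)) {0..2*pi}"
proof -
  define s where "s = fps_nth Sf"
  define \<omega> where "\<omega> = (\<lambda>t::real. exp (\<i> * of_real t))"
  have nz: "\<omega> t \<noteq> 0" for t by (simp add: \<omega>_def)
  have nw[simp]: "norm (\<omega> t) = 1" for t by (simp add: \<omega>_def)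
  have "ereal \<rho> < 1" using \<rho> by simp
  then have "ereal \<rho> < fps_conv_radius Sf" by (rule order.strict_trans2[OF _ R])
  then have "norm (of_real \<rho> :: complex) < fps_conv_radius Sf"
    using \<rho> by simp
  then have sm: "summable (\<lambda>k. norm (s k * of_real \<rho> ^ k))" unfolding s_def by (rule norm_summable_fps)
  have sm2: "summable (\<lambda>k. s k * of_real \<rho> ^ k * \<omega> t ^ k)" for t
    by (rule summable_norm_cancel, rule summable_comparison_test[OF _ sm])
       (simp add: norm_mult norm_power)
  define f1 where "f1 = (\<lambda>k t. s k * of_real \<rho> ^ k * (\<omega> t ^ k / \<omega> t ^ n))"
  define f2 where "f2 = (\<lambda>k t. cnj (s k) * of_real \<rho> ^ k * (\<omega> t ^ 0 / \<omega> t ^ (k + n)))"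
  have c\<omega>: "continuous_on A \<omega>" for A unfolding \<omega>_def by (intro continuous_intros)
  have cont1: "continuous_on {0..2*pi} (f1 k)" for k
    unfolding f1_def by (intro continuous_intros c\<omega>) (use nz in auto)
  have cont2: "continuous_on {0..2*pi} (f2 k)" for k
    unfolding f2_def by (intro continuous_intros c\<omega>) (use nz in auto)
  have b1: "norm (f1 k t) \<le> norm (s k * of_real \<rho> ^ k)" for k t
    by (simp add: f1_def norm_mult norm_power norm_divide)
  have b2: "norm (f2 k t) \<le> norm (s k * of_real \<rho> ^ k)" for k t
    by (simp add: f2_def norm_mult norm_power norm_divide)
  have i1: "integral {0..2*pi} (f1 k) = (if k = n then 2*pi * s n * of_real \<rho> ^ n else 0)" for k
  proof -
    have "(f1 k has_integral (s k * of_real \<rho> ^ k * (if k = n then 2*pi else 0))) {0..2*pi}"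
      unfolding f1_def \<omega>_def by (intro has_integral_mult_right orth_nat)
    then show ?thesis by (auto dest!: integral_unique)
  qed
  have i2: "integral {0..2*pi} (f2 k) = (if k = 0 then (if n = 0 then complex_of_real (2*pi) else 0) else 0)" for k
  proof -
    have "(f2 k has_integral (cnj (s k) * of_real \<rho> ^ k * (if 0 = k + n then 2*pi else 0))) {0..2*pi}"
      unfolding f2_def \<omega>_def by (intro has_integral_mult_right orth_nat)
    then show ?thesis using s0 by (auto dest!: integral_unique simp: s_def)
  qed
  have I1: "((\<lambda>t. \<Sum>k. f1 k t) has_integral (2*pi * s n * of_real \<rho> ^ n)) {0..2*pi}"
    by (rule termwise_has_integral[OF cont1 b1 sm]) (use sums_single[of n "\<lambda>_. 2*pi * s n * of_real \<rho> ^ n"] in \<open>simp add: i1\<close>)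
  have I2: "((\<lambda>t. \<Sum>k. f2 k t) has_integral (if n = 0 then complex_of_real (2*pi) else 0)) {0..2*pi}"
    by (rule termwise_has_integral[OF cont2 b2 sm]) (simp only: i2, rule sums_single[of 0 "\<lambda>_. (if n = 0 then complex_of_real (2*pi) else 0)"])
  have I3: "((\<lambda>t. \<omega> t ^ 0 / \<omega> t ^ n) has_integral (if 0 = n then 2*pi else 0)) {0..2*pi}"
    unfolding \<omega>_def by (rule orth_nat)
  have eq: "of_real (2 * Re (eval_fps Sf (of_real \<rho> * \<omega> t)) - 1) / \<omega> t ^ n
       = (\<Sum>k. f1 k t) + (\<Sum>k. f2 k t) - \<omega> t ^ 0 / \<omega> t ^ n" for t
  proof -
    have S: "(\<lambda>k. s k * of_real \<rho> ^ k * \<omega> t ^ k) sums eval_fps Sf (of_real \<rho> * \<omega> t)"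
      using sm2[of t] unfolding eval_fps_def s_def
      by (simp add: power_mult_distrib mult_ac summable_sums)
    have A: "(\<lambda>k. f1 k t) sums (eval_fps Sf (of_real \<rho> * \<omega> t) / \<omega> t ^ n)"
      using sums_divide[OF S, of "\<omega> t ^ n"] by (simp add: f1_def)
    have B0: "(\<lambda>k. cnj (s k * of_real \<rho> ^ k * \<omega> t ^ k)) sums cnj (eval_fps Sf (of_real \<rho> * \<omega> t))"
      using sums_cnj[THEN iffD2, OF S] .
    have cw: "cnj (\<omega> t) = 1 / \<omega> t" by (simp add: \<omega>_def cnj_expi)
    have fe: "cnj (s k * of_real \<rho> ^ k * \<omega> t ^ k) / \<omega> t ^ n = f2 k t" for k
    proof -
      have "cnj (s k * of_real \<rho> ^ k * \<omega> t ^ k) / \<omega> t ^ n = cnj (s k) * of_real \<rho> ^ k * (1 / \<omega> t) ^ k / \<omega> t ^ n"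
        by (simp add: cw)
      also have "\<dots> = f2 k t" using nz[of t] by (simp add: f2_def power_add power_one_over field_simps)
      finally show ?thesis .
    qed
    have B: "(\<lambda>k. f2 k t) sums (cnj (eval_fps Sf (of_real \<rho> * \<omega> t)) / \<omega> t ^ n)"
      using sums_divide[OF B0, of "\<omega> t ^ n"] by (simp only: fe)
    have "of_real (2 * Re (eval_fps Sf (of_real \<rho> * \<omega> t)) - 1) = 
           eval_fps Sf (of_real \<rho> * \<omega> t) + cnj (eval_fps Sf (of_real \<rho> * \<omega> t)) - 1"
      by (simp add: complex_add_cnj)
    then show ?thesis using sums_unique[OF A] sums_unique[OF B] nz by (simp add: diff_divide_distrib add_divide_distrib)
  qed
  have H0: "((\<lambda>t. (\<Sum>k. f1 k t) + (\<Sum>k. f2 k t) - \<omega> t ^ 0 / \<omega> t ^ n) has_integral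
          (2*pi * s n * of_real \<rho> ^ n + (if n = 0 then complex_of_real (2*pi) else 0) - complex_of_real (if 0 = n then 2*pi else 0))) {0..2*pi}"
    by (intro has_integral_diff has_integral_add I1 I2 I3)
  moreover have "2*pi * s n * of_real \<rho> ^ n + (if n = 0 then complex_of_real (2*pi) else 0) - complex_of_real (if 0 = n then 2*pi else 0)
     = 2*pi * s n * of_real \<rho> ^ n" by simp
  ultimately have H: "((\<lambda>t. (\<Sum>k. f1 k t) + (\<Sum>k. f2 k t) - \<omega> t ^ 0 / \<omega> t ^ n) has_integral
          (2*pi * s n * of_real \<rho> ^ n)) {0..2*pi}" by (simp only:)
  have "((\<lambda>t. of_real (2 * Re (eval_fps Sf (of_real \<rho> * \<omega> t)) - 1) / \<omega> t ^ n) has_integral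
          (2*pi * s n * of_real \<rho> ^ n)) {0..2*pi}" by (simp only: eq H)
  then show ?thesis by (simp only: \<omega>_def s_def)
qed



lemma core:
  fixes Pf Sf :: "complex fps" and \<beta> :: real and z :: complex
  assumes RP: "fps_conv_radius Pf \<ge> 1" and RS: "fps_conv_radius Sf \<ge> 1" and s0: "fps_nth Sf 0 = 1"
    and P: "\<And>w. norm w < 1 \<Longrightarrow> Re (eval_fps Pf w) > \<beta>"
    and S: "\<And>w. norm w < 1 \<Longrightarrow> Re (eval_fps Sf w) > 1/2"
    and z: "norm z < 1"
  shows "\<exists>L. (\<lambda>n. fps_nth Pf n * fps_nth Sf n * z ^ n) sums L \<and> Re L > \<beta>"
proof -
  define \<rho> where "\<rho> = (1 + norm z) / 2"
  have nz0: "0 \<le> norm z" by simp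
  have \<rho>1: "0 < \<rho>" unfolding \<rho>_def by (simp add: add_pos_nonneg)
  have \<rho>2: "\<rho> < 1" using z unfolding \<rho>_def by (simp add: field_simps)
  have \<rho>3: "norm z < \<rho>" using z unfolding \<rho>_def by (simp add: field_simps)
  note \<rho> = \<rho>1 \<rho>2 \<rho>3
  define \<omega> where "\<omega> = (\<lambda>t::real. exp (\<i> * of_real t))"
  have nz: "\<omega> t \<noteq> 0" for t by (simp add: \<omega>_def)
  have nw[simp]: "norm (\<omega> t) = 1" for t by (simp add: \<omega>_def)
  have c\<omega>: "continuous_on A \<omega>" for A unfolding \<omega>_def by (intro continuous_intros)
  define W where "W = (\<lambda>t. 2 * Re (eval_fps Sf (of_real \<rho> * \<omega> t)) - 1)"
  define Q where "Q = (\<lambda>t. eval_fps Pf (z / (of_real \<rho> * \<omega> t)))"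
  define x where "x = z / of_real \<rho>"
  have nx: "norm x < 1" using \<rho> by (simp add: x_def norm_divide)
  have R1: "ereal r < 1 \<Longrightarrow> ereal r < fps_conv_radius F" if "fps_conv_radius F \<ge> 1" for r and F :: "complex fps"
    using order.strict_trans2 that by blast
  have Wpos: "W t > 0" for t
  proof -
    have "norm (of_real \<rho> * \<omega> t) < 1" using \<rho> by (simp add: norm_mult)
    then show ?thesis using S by (fastforce simp: W_def)
  qed
  have Qgt: "Re (Q t) > \<beta>" for t
  proof -
    have "norm (z / (of_real \<rho> * \<omega> t)) < 1" using \<rho> by (simp add: norm_divide norm_mult)
    then show ?thesis using P by (simp add: Q_def)
  qed
  have cW: "continuous_on {0..2*pi} W"
  proof -
    have "continuous_on {0..2*pi} (\<lambda>t. eval_fps Sf (of_real \<rho> * \<omega> t))"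
    proof (rule continuous_on_eval_fps')
      show "continuous_on {0..2*pi} (\<lambda>t. of_real \<rho> * \<omega> t)" by (intro continuous_intros c\<omega>)
      show "(\<lambda>t. complex_of_real \<rho> * \<omega> t) ` {0..2 * pi} \<subseteq> eball 0 (fps_conv_radius Sf)"
        using \<rho> R1[OF RS, of \<rho>] by (auto simp: norm_mult)
    qed
    then have "continuous_on {0..2*pi} (\<lambda>t. Re (eval_fps Sf (of_real \<rho> * \<omega> t)))" by (rule continuous_on_Re)
    then show ?thesis unfolding W_def by (auto intro!: continuous_on_diff continuous_on_mult continuous_on_const)
  qed
  have cQ: "continuous_on {0..2*pi} Q"
    unfolding Q_def
  proof (rule continuous_on_eval_fps')
    show "continuous_on {0..2*pi} (\<lambda>t. z / (of_real \<rho> * \<omega> t))" 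
      by (intro continuous_intros c\<omega>) (use nz \<rho> in auto)
    have "ereal (norm z / \<rho>) < 1" using \<rho> by simp
    then show "(\<lambda>t. z / (of_real \<rho> * \<omega> t)) ` {0..2 * pi} \<subseteq> eball 0 (fps_conv_radius Pf)"
      using \<rho> R1[OF RP, of "norm z / \<rho>"] by (auto simp: norm_mult norm_divide)
  qed
  obtain B where B: "B > 0" "\<And>t. t \<in> {0..2*pi} \<Longrightarrow> norm (W t) \<le> B"
    using compact_imp_bounded[OF compact_continuous_image[OF cW compact_Icc]]
    unfolding bounded_pos by auto
  define p where "p = fps_nth Pf"
  define s where "s = fps_nth Sf"
  define g where "g = (\<lambda>n t. p n * x ^ n * (of_real (W t) / \<omega> t ^ n))"
  have smx: "summable (\<lambda>n. norm (p n * x ^ n))"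
    unfolding p_def by (rule norm_summable_fps) (use R1[OF RP, of "norm x"] nx in auto)
  have cg: "continuous_on {0..2*pi} (g n)" for n
    unfolding g_def by (intro continuous_intros c\<omega> cW) (use nz in auto)
  have bg: "norm (g n t) \<le> B * norm (p n * x ^ n)" if "t \<in> {0..2*pi}" for n t
    using B(2)[OF that] by (simp add: g_def norm_mult norm_divide norm_power mult_ac mult_right_mono)
  have smB: "summable (\<lambda>n. B * norm (p n * x ^ n))" using smx by (rule summable_mult)
  have ig: "integral {0..2*pi} (g n) = 2 * pi * (p n * s n * z ^ n)" for n
  proof -
    have "((\<lambda>t. of_real (W t) / \<omega> t ^ n) has_integral (2*pi * s n * of_real \<rho> ^ n)) {0..2*pi}"
      using weight_coeff[OF RS \<rho>(1,2) s0, of n] by (simp add: W_def \<omega>_def s_def)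
    then have "(g n has_integral p n * x ^ n * (2*pi * s n * of_real \<rho> ^ n)) {0..2*pi}"
      unfolding g_def by (rule has_integral_mult_right)
    moreover have "x ^ n * of_real \<rho> ^ n = z ^ n" using \<rho> by (simp add: x_def power_divide)
    ultimately show ?thesis by (auto dest!: integral_unique simp: algebra_simps)
  qed
  have eqWQ: "of_real (W t) * Q t = (\<Sum>n. g n t)" for t
  proof -
    have "norm (z / (of_real \<rho> * \<omega> t)) < fps_conv_radius Pf"
      using R1[OF RP, of "norm x"] nx by (simp add: x_def norm_divide norm_mult)
    then have "(\<lambda>n. p n * (z / (of_real \<rho> * \<omega> t)) ^ n) sums Q t"
      unfolding Q_def p_def by (rule sums_eval_fps)
    then have "(\<lambda>n. of_real (W t) * (p n * (z / (of_real \<rho> * \<omega> t)) ^ n)) sums (of_real (W t) * Q t)"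
      by (rule sums_mult)
    moreover have "of_real (W t) * (p n * (z / (of_real \<rho> * \<omega> t)) ^ n) = g n t" for n
      using nz[of t] by (simp add: g_def x_def power_divide power_mult_distrib field_simps)
    ultimately show ?thesis by (simp add: sums_unique)
  qed
  define J where "J = integral {0..2*pi} (\<lambda>t. of_real (W t) * Q t)"
  have "(\<lambda>n. integral {0..2*pi} (g n)) sums J"
    using termwise_integral(1)[OF cg bg smB] unfolding J_def eqWQ .
  then have sJ: "(\<lambda>n. 2 * pi * (p n * s n * z ^ n)) sums J" by (simp add: ig)
  have sL: "(\<lambda>n. p n * s n * z ^ n) sums (J / (2*pi))"
    using sums_divide[OF sJ, of "2*pi"] by simp
  have intWQ: "((\<lambda>t. of_real (W t) * Q t) has_integral J) {0..2*pi}"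
    using termwise_integral(2)[OF cg bg smB] unfolding J_def eqWQ[symmetric]
    by (simp add: integrable_integral)
  have h1: "((\<lambda>t. W t * Re (Q t)) has_integral Re J) {0..2*pi}"
    using has_integral_linear[OF intWQ bounded_linear_Re] by (simp add: o_def)
  have h2: "(W has_integral 2*pi) {0..2*pi}"
  proof -
    have "((\<lambda>t. of_real (W t) / \<omega> t ^ 0) has_integral (2*pi * s 0 * of_real \<rho> ^ 0)) {0..2*pi}"
      using weight_coeff[OF RS \<rho>(1,2) s0, of 0] by (simp add: W_def \<omega>_def s_def)
    then have "((\<lambda>t. complex_of_real (W t)) has_integral of_real (2*pi)) {0..2*pi}"
      using s0 by (simp add: s_def)
    from has_integral_linear[OF this bounded_linear_Re] show ?thesis by (simp add: o_def)
  qed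
  define h where "h = (\<lambda>t. W t * Re (Q t) - \<beta> * W t)"
  have hI: "(h has_integral Re J - \<beta> * (2*pi)) {0..2*pi}"
    unfolding h_def by (intro has_integral_diff h1 has_integral_mult_right h2)
  have ch: "continuous_on {0..2*pi} h" unfolding h_def by (intro continuous_intros cW cQ)
  obtain t0 where t0: "t0 \<in> {0..2*pi}" "\<And>t. t \<in> {0..2*pi} \<Longrightarrow> h t0 \<le> h t"
    using continuous_attains_inf[OF compact_Icc _ ch] by auto
  have hpos: "h t > 0" for t
  proof -
    have "h t = W t * (Re (Q t) - \<beta>)" by (simp add: h_def algebra_simps)
    then show ?thesis using Wpos[of t] Qgt[of t] by simp
  qed
  have "((\<lambda>t. h t0) has_integral (2*pi) * h t0) {0..2*pi}"
    using has_integral_const_real[of "h t0" 0 "2*pi"] by simp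
  then have "(2*pi) * h t0 \<le> Re J - \<beta> * (2*pi)"
    by (rule has_integral_le[OF _ hI]) (use t0 in auto)
  moreover have "(2*pi) * h t0 > 0" using hpos[of t0] by simp
  ultimately have "Re J > \<beta> * (2*pi)" by linarith
  then have "Re (J / (2*pi)) > \<beta>" by (simp add: field_simps)
  then show ?thesis using sL unfolding p_def s_def by blast
qed



lemma R1: "fps_conv_radius F \<ge> 1 \<Longrightarrow> norm (z::complex) < 1 \<Longrightarrow> ereal (norm z) < fps_conv_radius F"
proof -
  assume a: "fps_conv_radius F \<ge> 1" "norm z < 1"
  then have "ereal (norm z) < 1" by simp
  then show ?thesis using a(1) by (rule order.strict_trans2)
qed

lemma hol_fps:
  assumes hol: "f holomorphic_on ball 0 1"
  shows "fps_conv_radius (Abs_fps (taylor_coeff f)) \<ge> 1"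
    and "\<And>z. norm z < 1 \<Longrightarrow> eval_fps (Abs_fps (taylor_coeff f)) z = f z"
proof -
  have S: "(\<lambda>n. taylor_coeff f n * z ^ n) sums f z" if "norm z < 1" for z
    using holomorphic_power_series[OF hol, of z] that by (simp add: taylor_coeff_def)
  show "fps_conv_radius (Abs_fps (taylor_coeff f)) \<ge> 1" unfolding fps_conv_radius_def
  proof (rule conv_radius_geI_ex')
    fix r :: real assume r: "0 < r" "ereal r < 1"
    then have "norm (of_real r :: complex) < 1" by simp
    then have "(\<lambda>n. taylor_coeff f n * of_real r ^ n) sums f (of_real r)" by (rule S)
    then show "summable (\<lambda>n. fps_nth (Abs_fps (taylor_coeff f)) n * of_real r ^ n)"
      by (simp add: sums_summable)
  qed
  show "eval_fps (Abs_fps (taylor_coeff f)) z = f z" if "norm z < 1" for z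
    unfolding eval_fps_def using S[OF that] by (simp add: sums_iff)
qed

lemma prod_radius:
  fixes a b :: "nat \<Rightarrow> complex"
  assumes ra: "conv_radius a \<ge> 1" and rb: "conv_radius b \<ge> 1"
  shows "conv_radius (\<lambda>n. a n * b n) \<ge> 1"
proof (rule conv_radius_geI_ex')
  fix r :: real assume r: "0 < r" "ereal r < 1"
  define q where "q = sqrt r"
  have q: "0 < q" "q < 1" "q * q = r" using r by (auto simp: q_def)
  have "ereal (norm (of_real q :: complex)) < 1" using q by simp
  then have qa: "ereal (norm (of_real q :: complex)) < conv_radius a" 
    and qb: "ereal (norm (of_real q :: complex)) < conv_radius b"
    using ra rb order.strict_trans2 by blast+
  have sa: "summable (\<lambda>n. norm (a n * of_real q ^ n))" by (rule abs_summable_in_conv_radius[OF qa])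
  have sb: "summable (\<lambda>n. norm (b n * of_real q ^ n))" by (rule abs_summable_in_conv_radius[OF qb])
  have "(\<lambda>n. norm (b n * of_real q ^ n)) \<longlonglongrightarrow> 0" by (rule summable_LIMSEQ_zero[OF sb])
  then have "Bseq (\<lambda>n. norm (b n * of_real q ^ n))" by (rule convergent_imp_Bseq[OF convergentI])
  then obtain K where K: "K > 0" "\<And>n. norm (norm (b n * of_real q ^ n)) \<le> K" by (auto simp: Bseq_def)
  have "summable (\<lambda>n. norm (a n * b n * of_real r ^ n))"
  proof (rule summable_comparison_test[OF _ summable_mult2[OF sa, of K]])
    show "\<exists>N. \<forall>n\<ge>N. norm (norm (a n * b n * of_real r ^ n)) \<le> norm (a n * of_real q ^ n) * K"
    proof (intro exI allI impI)
      fix n :: nat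
      have "norm (a n * b n * of_real r ^ n) = norm (a n * of_real q ^ n) * norm (b n * of_real q ^ n)"
        using q r(1) by (simp add: norm_mult norm_power power_mult_distrib[symmetric] mult_ac)
      also have "\<dots> \<le> norm (a n * of_real q ^ n) * K" using K(2)[of n] by (simp add: mult_left_mono)
      finally show "norm (norm (a n * b n * of_real r ^ n)) \<le> norm (a n * of_real q ^ n) * K" by simp
    qed
  qed
  then show "summable (\<lambda>n. a n * b n * of_real r ^ n)" by (rule summable_norm_cancel)
qed

definition Dop :: "real \<Rightarrow> complex fps \<Rightarrow> complex fps" where
  "Dop \<alpha> X = Abs_fps (\<lambda>n. of_nat (n+1) * (1 + of_real \<alpha> * of_nat n) * fps_nth X (n+1))"

lemma Dop_nth: "fps_nth (Dop \<alpha> X) n = of_nat (n+1) * (1 + of_real \<alpha> * of_nat n) * fps_nth X (n+1)"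
  by (simp add: Dop_def)

lemma deriv2_cong:
  assumes "\<And>w. norm w < 1 \<Longrightarrow> f w = g w" "norm z < 1"
  shows "deriv f z = deriv g z" "deriv (deriv f) z = deriv (deriv g) z"
proof -
  have ev: "eventually (\<lambda>w. f w = g w) (nhds u)" if "norm u < 1" for u
  proof -
    have "eventually (\<lambda>w. w \<in> ball 0 1) (nhds u)" using that by (intro eventually_nhds_in_open) auto
    then show ?thesis by eventually_elim (use assms(1) in auto)
  qed
  have d: "deriv f u = deriv g u" if "norm u < 1" for u by (rule deriv_cong_ev[OF ev[OF that] refl])
  show "deriv f z = deriv g z" by (rule d[OF assms(2)])
  have "eventually (\<lambda>w. w \<in> ball 0 1) (nhds z)" using assms(2) by (intro eventually_nhds_in_open) auto
  then have "eventually (\<lambda>w. deriv f w = deriv g w) (nhds z)" by eventually_elim (use d in auto)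
  then show "deriv (deriv f) z = deriv (deriv g) z" by (rule deriv_cong_ev[OF _ refl])
qed

lemma Dop_props:
  fixes X :: "complex fps" and \<alpha> :: real
  assumes R: "fps_conv_radius X \<ge> 1"
  shows "fps_conv_radius (Dop \<alpha> X) \<ge> 1"
    and "\<And>z. norm z < 1 \<Longrightarrow> deriv (eval_fps X) z + of_real \<alpha> * z * deriv (deriv (eval_fps X)) z = eval_fps (Dop \<alpha> X) z"
proof -
  define X1 where "X1 = fps_deriv X"
  define X2 where "X2 = fps_deriv X1"
  have DD: "Dop \<alpha> X = X1 + fps_const (of_real \<alpha>) * (fps_X * X2)"
  proof (rule fps_ext)
    fix n show "Dop \<alpha> X $ n = (X1 + fps_const (of_real \<alpha>) * (fps_X * X2)) $ n"
      by (cases n) (simp_all add: Dop_nth X1_def X2_def algebra_simps)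
  qed
  have r1: "fps_conv_radius X1 \<ge> 1" using R fps_conv_radius_deriv[of X] unfolding X1_def by (rule order.trans)
  have r2: "fps_conv_radius X2 \<ge> 1" using r1 fps_conv_radius_deriv[of X1] unfolding X2_def by (rule order.trans)
  have r3: "fps_conv_radius (fps_X * X2) \<ge> 1"
    using r2 fps_conv_radius_mult[of fps_X X2] by simp
  have r4: "fps_conv_radius (fps_const (of_real \<alpha>) * (fps_X * X2)) \<ge> 1"
    using r3 fps_conv_radius_mult[of "fps_const (of_real \<alpha>)" "fps_X * X2"] by simp
  show "fps_conv_radius (Dop \<alpha> X) \<ge> 1"
    unfolding DD using r1 r4 fps_conv_radius_add[of X1 "fps_const (of_real \<alpha>) * (fps_X * X2)"]
    by (simp add: min_def split: if_splits)
  fix z :: complex assume z: "norm z < 1"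
  have e1: "deriv (eval_fps X) z = eval_fps X1 z"
    unfolding X1_def by (rule eval_fps_deriv[symmetric]) (rule R1[OF R z])
  have e2: "deriv (deriv (eval_fps X)) z = eval_fps X2 z"
  proof -
    have "deriv (deriv (eval_fps X)) z = deriv (eval_fps X1) z"
      by (rule deriv2_cong(1)[OF _ z]) (unfold X1_def, rule eval_fps_deriv[symmetric], rule R1[OF R])
    also have "\<dots> = eval_fps X2 z"
      unfolding X2_def by (rule eval_fps_deriv[symmetric]) (rule R1[OF r1 z])
    finally show ?thesis .
  qed
  have "eval_fps (Dop \<alpha> X) z = eval_fps X1 z + eval_fps (fps_const (of_real \<alpha>) * (fps_X * X2)) z"
    unfolding DD by (rule eval_fps_add) (use R1[OF r1 z] R1[OF r4 z] in auto)
  also have "eval_fps (fps_const (of_real \<alpha>) * (fps_X * X2)) z = of_real \<alpha> * (z * eval_fps X2 z)"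
    by (subst eval_fps_mult, simp, rule R1[OF r3 z], subst eval_fps_mult, simp, rule R1[OF r2 z]) simp
  finally show "deriv (eval_fps X) z + of_real \<alpha> * z * deriv (deriv (eval_fps X)) z = eval_fps (Dop \<alpha> X) z"
    using e1 e2 by (simp add: mult_ac)
qed

theorem theorem4p7:
  fixes \<alpha> \<beta> :: real and h g \<phi> :: "complex \<Rightarrow> complex"
  assumes "\<alpha> \<ge> 0" and "0 \<le> \<beta>" and "\<beta> < 1"
    and "W_H0 \<alpha> \<beta> h g"
    and "\<phi> holomorphic_on ball 0 1" and "\<phi> 0 = 0" and "deriv \<phi> 0 = 1"
    and "\<forall>z\<in>ball 0 1. z \<noteq> 0 \<longrightarrow> Re (\<phi> z / z) > 1/2"
  shows "W_H0 \<alpha> \<beta> (hadamard h \<phi>) (hadamard g \<phi>)"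
proof -
  from assms(4) have hol_h: "h holomorphic_on ball 0 1" and hol_g: "g holomorphic_on ball 0 1"
    and h0: "h 0 = 0" and dh0: "deriv h 0 = 1" and g0: "g 0 = 0" and dg0: "deriv g 0 = 0"
    and cond: "\<And>z. z \<in> ball 0 1 \<Longrightarrow> Re (deriv h z + of_real \<alpha> * z * deriv (deriv h) z - of_real \<beta>)
          > cmod (deriv g z + of_real \<alpha> * z * deriv (deriv g) z)"
    unfolding W_H0_def in_H0_def by auto
  have hol_p: "\<phi> holomorphic_on ball 0 1" by (rule assms(5))
  define a where "a = taylor_coeff h"
  define b where "b = taylor_coeff g"
  define c where "c = taylor_coeff \<phi>"
  define A where "A = Abs_fps a"
  define B where "B = Abs_fps b"
  define C where "C = Abs_fps c"
  have rA: "fps_conv_radius A \<ge> 1" and eA: "\<And>z. norm z < 1 \<Longrightarrow> eval_fps A z = h z"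
    using hol_fps[OF hol_h] unfolding A_def a_def by auto
  have rB: "fps_conv_radius B \<ge> 1" and eB: "\<And>z. norm z < 1 \<Longrightarrow> eval_fps B z = g z"
    using hol_fps[OF hol_g] unfolding B_def b_def by auto
  have rC: "fps_conv_radius C \<ge> 1" and eC: "\<And>z. norm z < 1 \<Longrightarrow> eval_fps C z = \<phi> z"
    using hol_fps[OF hol_p] unfolding C_def c_def by auto
  define H where "H = Abs_fps (\<lambda>n. a n * c n)"
  define G where "G = Abs_fps (\<lambda>n. b n * c n)"
  have rH: "fps_conv_radius H \<ge> 1"
    using prod_radius[of a c] rA rC unfolding H_def A_def C_def fps_conv_radius_def by simp
  have rG: "fps_conv_radius G \<ge> 1"
    using prod_radius[of b c] rB rC unfolding G_def B_def C_def fps_conv_radius_def by simp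
  have hH: "hadamard h \<phi> = eval_fps H"
    by (rule ext) (simp add: hadamard_def eval_fps_def H_def a_def c_def)
  have hG: "hadamard g \<phi> = eval_fps G"
    by (rule ext) (simp add: hadamard_def eval_fps_def G_def b_def c_def)
  have a0: "a 0 = 0" using h0 by (simp add: a_def taylor_coeff_def)
  have b0: "b 0 = 0" using g0 by (simp add: b_def taylor_coeff_def)
  have c0: "c 0 = 0" using assms(6) by (simp add: c_def taylor_coeff_def)
  have a1: "a 1 = 1" using dh0 by (simp add: a_def taylor_coeff_def)
  have b1: "b 1 = 0" using dg0 by (simp add: b_def taylor_coeff_def)
  have c1: "c 1 = 1" using assms(7) by (simp add: c_def taylor_coeff_def)
  have n0: "norm (0::complex) < 1" by simp
  have holH: "eval_fps H holomorphic_on ball 0 1"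
    by (intro holomorphic_on_eval_fps ball_eball_mono) (metis rH one_ereal_def)
  have holG: "eval_fps G holomorphic_on ball 0 1"
    by (intro holomorphic_on_eval_fps ball_eball_mono) (metis rG one_ereal_def)
  have H0: "eval_fps H 0 = 0" using a0 by (simp add: eval_fps_at_0 H_def)
  have G0: "eval_fps G 0 = 0" using b0 by (simp add: eval_fps_at_0 G_def)
  have dH0: "deriv (eval_fps H) 0 = 1"
    using eval_fps_deriv[OF R1[OF rH n0]] a1 c1 by (simp add: eval_fps_at_0 H_def)
  have dG0: "deriv (eval_fps G) 0 = 0"
    using eval_fps_deriv[OF R1[OF rG n0]] b1 by (simp add: eval_fps_at_0 G_def)
  have main: "Re (deriv (eval_fps H) z + of_real \<alpha> * z * deriv (deriv (eval_fps H)) z - of_real \<beta>)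
          > cmod (deriv (eval_fps G) z + of_real \<alpha> * z * deriv (deriv (eval_fps G)) z)"
    if zb: "z \<in> ball 0 1" for z
  proof -
    have z: "norm z < 1" using zb by simp
    define EH where "EH = eval_fps (Dop \<alpha> H) z"
    define EG where "EG = eval_fps (Dop \<alpha> G) z"
    have EH: "deriv (eval_fps H) z + of_real \<alpha> * z * deriv (deriv (eval_fps H)) z = EH"
      unfolding EH_def by (rule Dop_props(2)[OF rH z])
    have EG: "deriv (eval_fps G) z + of_real \<alpha> * z * deriv (deriv (eval_fps G)) z = EG"
      unfolding EG_def by (rule Dop_props(2)[OF rG z])
    define \<epsilon> where "\<epsilon> = (if EG = 0 then 1 else - cnj EG / of_real (cmod EG))"
    have eps1: "cmod \<epsilon> \<le> 1" by (simp add: \<epsilon>_def norm_divide)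
    have sq: "EG * cnj EG = of_real (cmod EG) * of_real (cmod EG)"
      using complex_norm_square[of EG] by (simp add: power2_eq_square)
    have epsEG: "\<epsilon> * EG = - of_real (cmod EG)"
      using sq by (auto simp: \<epsilon>_def field_simps)
    define Pf where "Pf = Dop \<alpha> A + fps_const \<epsilon> * Dop \<alpha> B"
    define Sf where "Sf = fps_shift 1 C"
    have rDA: "fps_conv_radius (Dop \<alpha> A) \<ge> 1" by (rule Dop_props(1)[OF rA])
    have rDB: "fps_conv_radius (Dop \<alpha> B) \<ge> 1" by (rule Dop_props(1)[OF rB])
    have rDB': "fps_conv_radius (fps_const \<epsilon> * Dop \<alpha> B) \<ge> 1"
      using rDB fps_conv_radius_mult[of "fps_const \<epsilon>" "Dop \<alpha> B"] by simp
    have rP: "fps_conv_radius Pf \<ge> 1"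
      unfolding Pf_def using rDA rDB' fps_conv_radius_add[of "Dop \<alpha> A" "fps_const \<epsilon> * Dop \<alpha> B"]
      by (simp add: min_def split: if_splits)
    have rS: "fps_conv_radius Sf \<ge> 1" using rC by (simp add: Sf_def)
    have s0: "fps_nth Sf 0 = 1" using c1 by (simp add: Sf_def C_def)
    have P: "Re (eval_fps Pf w) > \<beta>" if w: "norm w < 1" for w
    proof -
      have "eval_fps Pf w = eval_fps (Dop \<alpha> A) w + eval_fps (fps_const \<epsilon> * Dop \<alpha> B) w"
        unfolding Pf_def by (rule eval_fps_add) (use R1[OF rDA w] R1[OF rDB' w] in auto)
      also have "eval_fps (fps_const \<epsilon> * Dop \<alpha> B) w = \<epsilon> * eval_fps (Dop \<alpha> B) w"
        by (subst eval_fps_mult) (use R1[OF rDB w] in auto)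
      finally have e: "eval_fps Pf w = eval_fps (Dop \<alpha> A) w + \<epsilon> * eval_fps (Dop \<alpha> B) w" .
      have dA: "deriv (eval_fps A) w = deriv h w" "deriv (deriv (eval_fps A)) w = deriv (deriv h) w"
        using deriv2_cong[OF eA w] by auto
      have dB: "deriv (eval_fps B) w = deriv g w" "deriv (deriv (eval_fps B)) w = deriv (deriv g) w"
        using deriv2_cong[OF eB w] by auto
      define X where "X = deriv h w + of_real \<alpha> * w * deriv (deriv h) w"
      define Y where "Y = deriv g w + of_real \<alpha> * w * deriv (deriv g) w"
      have e2: "eval_fps Pf w = X + \<epsilon> * Y"
        unfolding e X_def Y_def using Dop_props(2)[OF rA w, of \<alpha>] Dop_props(2)[OF rB w, of \<alpha>] dA dB by simp
      have c1: "Re (X - of_real \<beta>) > cmod Y" using cond[of w] w by (simp add: X_def Y_def)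
      have "- cmod (\<epsilon> * Y) \<le> Re (\<epsilon> * Y)" using abs_Re_le_cmod[of "\<epsilon> * Y"] by linarith
      moreover have "cmod (\<epsilon> * Y) \<le> cmod Y"
        using eps1 by (simp add: norm_mult mult_left_le_one_le)
      ultimately show ?thesis using c1 e2 by simp
    qed
    have sub: "subdegree C \<ge> 1"
      by (rule subdegree_geI) (use c0 c1 in \<open>auto simp: C_def fps_eq_iff intro: exI[of _ "Suc 0"]\<close>)
    have S: "Re (eval_fps Sf w) > 1/2" if w: "norm w < 1" for w
    proof -
      have "eval_fps Sf w = (if w = 0 then fps_nth C 1 else eval_fps C w / w ^ 1)"
        unfolding Sf_def by (rule eval_fps_shift[OF sub R1[OF rC w]])
      then show ?thesis using assms(8) eC[OF w] w c1 by (auto simp: C_def)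
    qed
    obtain L where L: "(\<lambda>n. fps_nth Pf n * fps_nth Sf n * z ^ n) sums L" and ReL: "Re L > \<beta>"
      using core[OF rP rS s0 P S z] by blast
    have sH: "(\<lambda>n. fps_nth (Dop \<alpha> H) n * z ^ n) sums EH"
      unfolding EH_def by (rule sums_eval_fps[OF R1[OF Dop_props(1)[OF rH] z]])
    have sG: "(\<lambda>n. fps_nth (Dop \<alpha> G) n * z ^ n) sums EG"
      unfolding EG_def by (rule sums_eval_fps[OF R1[OF Dop_props(1)[OF rG] z]])
    have "(\<lambda>n. fps_nth (Dop \<alpha> H) n * z ^ n + \<epsilon> * (fps_nth (Dop \<alpha> G) n * z ^ n)) sums (EH + \<epsilon> * EG)"
      by (intro sums_add sH sums_mult sG)
    moreover have "fps_nth (Dop \<alpha> H) n * z ^ n + \<epsilon> * (fps_nth (Dop \<alpha> G) n * z ^ n) = fps_nth Pf n * fps_nth Sf n * z ^ n" for n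
      by (simp add: Pf_def Sf_def Dop_nth H_def G_def A_def B_def C_def algebra_simps)
    ultimately have "L = EH + \<epsilon> * EG" using L sums_unique2 by simp
    then have "Re EH - cmod EG > \<beta>" using ReL epsEG by simp
    then show ?thesis unfolding EH EG by simp
  qed
  show ?thesis unfolding hH hG W_H0_def in_H0_def
    using holH holG H0 G0 dH0 dG0 main by blast
qed

end
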